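(* Let $k$ be a field of characteristic $0$, $R=k[x_1,\dots,x_n]$, $\ell=x_1+\dots+x_n$, let $d_1,\dots,d_n$ be positive integers such that $I=(x_1^{d_1},\dots,x_{n-1}^{d_{n-1}},x_n^2,\ell^{d_n})$ is minimally generated by these elements, and let $(a_1,\dots,a_{n+1})\in R^{n+1}$ satisfy $a_1x_1^{d_1}+\dots+a_{n-1}x_{n-1}^{d_{n-1}}+a_nx_n^2+a_{n+1}\ell^{d_n}=0$. If $\sum_{i=1}^n(d_i-1)$ is odd, then $$c_1a_1x_1^{d_1-2}+\dots+c_{n-1}a_{n-1}x_{n-1}^{d_{n-1}-2}+a_n+c_na_{n+1}\ell^{d_n-2}\in I,$$ where $c_i=\sum_{j=0}^{\lfloor (d_i-1)/2\rfloor}(d_i-1-2j)^2$. In particular, when $n$ is odd, every relation $(a_1,\dots,a_{n+1})$ of $(x_1^2,\dots,x_n^2,\ell^2)$ (i.e. $\sum_{i=1}^n a_ix_i^2+a_{n+1}\ell^2=0$) satisfies $a_1+\dots+a_{n+1}\in(x_1^2,\dots,x_n^2,\ell^2)$.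
   Context: When $c_i=0$ the corresponding term (which may involve a negative exponent formally) is zero. *)

theory Defs
  imports Main "HOL-Library.Poly_Mapping"
begin

text \<open>Multivariate polynomials over a coefficient ring 'a, in variables indexed by nat:
  a polynomial is a finitely supported map from monomials (exponent vectors)
  to coefficients; multiplication is the convolution product of Poly_Mapping.\<close>

type_synonym 'a mpoly = "(nat \<Rightarrow>\<^sub>0 nat) \<Rightarrow>\<^sub>0 'a"

definition Var :: "nat \<Rightarrow> 'a::comm_ring_1 mpoly" where
  "Var i = Poly_Mapping.single (Poly_Mapping.single i 1) 1"

definition Const :: "'a::comm_ring_1 \<Rightarrow> 'a mpoly" where
  "Const c = Poly_Mapping.single 0 c"

definition in_R :: "nat \<Rightarrow> 'a::comm_ring_1 mpoly \<Rightarrow> bool" where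
  "in_R n p \<longleftrightarrow> (\<forall>m::nat \<Rightarrow>\<^sub>0 nat. m \<in> Poly_Mapping.keys p \<longrightarrow> Poly_Mapping.keys m \<subseteq> {1..n})"

definition in_ideal :: "nat \<Rightarrow> 'i set \<Rightarrow> ('i \<Rightarrow> 'a::comm_ring_1 mpoly) \<Rightarrow> 'a mpoly \<Rightarrow> bool" where
  "in_ideal n S g f \<longleftrightarrow> (\<exists>b. (\<forall>i\<in>S. in_R n (b i)) \<and> f = (\<Sum>i\<in>S. b i * g i))"

definition minimally_generated :: "nat \<Rightarrow> 'i set \<Rightarrow> ('i \<Rightarrow> 'a::comm_ring_1 mpoly) \<Rightarrow> bool" where
  "minimally_generated n S g \<longleftrightarrow> (\<forall>i\<in>S. \<not> in_ideal n (S - {i}) g (g i))"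

definition ell :: "nat \<Rightarrow> 'a::comm_ring_1 mpoly" where
  "ell n = (\<Sum>i=1..n. Var i)"

definition gens :: "nat \<Rightarrow> (nat \<Rightarrow> nat) \<Rightarrow> nat \<Rightarrow> 'a::comm_ring_1 mpoly" where
  "gens n d i = (if i < n then Var i ^ d i else if i = n then Var n ^ 2 else ell n ^ d n)"

definition cc :: "nat \<Rightarrow> nat" where
  "cc di = (\<Sum>j=0..(di - 1) div 2. (di - 1 - 2*j)^2)"

end

theory Submission
  imports Defs
begin

lemma update_single_add:
  "a \<notin> Poly_Mapping.keys f \<Longrightarrow> Poly_Mapping.update a b f = Poly_Mapping.single a b + f"
  by (rule poly_mapping_eqI) (auto simp: lookup_update lookup_add lookup_single in_keys_iff)

lemma pm_induct[case_names zero add]: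
  assumes "P 0"
    and "\<And>f m c. m \<notin> Poly_Mapping.keys f \<Longrightarrow> c \<noteq> 0 \<Longrightarrow> P f \<Longrightarrow> P (Poly_Mapping.single m c + f)"
  shows "P p"
  by (induction p rule: update_induct) (auto simp: update_single_add assms)

definition lin :: "('m \<Rightarrow> 'b::zero \<Rightarrow> 'c::comm_monoid_add) \<Rightarrow> ('m \<Rightarrow>\<^sub>0 'b) \<Rightarrow> 'c" where
  "lin f p = (\<Sum>m\<in>Poly_Mapping.keys p. f m (Poly_Mapping.lookup p m))"

lemma lin_superset:
  assumes "finite S" "Poly_Mapping.keys p \<subseteq> S" "\<And>m. f m 0 = 0"
  shows "lin f p = (\<Sum>m\<in>S. f m (Poly_Mapping.lookup p m))"
  unfolding lin_def
  by (rule sum.mono_neutral_left) (use assms in \<open>auto simp: in_keys_iff\<close>)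

lemma lin_add:
  assumes "\<And>m. f m 0 = 0" "\<And>m a b. f m (a + b) = f m a + f m b"
  shows "lin f (p + q) = lin f p + lin f q"
proof -
  let ?S = "Poly_Mapping.keys p \<union> Poly_Mapping.keys q"
  have "lin f (p + q) = (\<Sum>m\<in>?S. f m (Poly_Mapping.lookup (p+q) m))"
    by (rule lin_superset) (use assms keys_add[of p q] in auto)
  also have "\<dots> = (\<Sum>m\<in>?S. f m (Poly_Mapping.lookup p m)) + (\<Sum>m\<in>?S. f m (Poly_Mapping.lookup q m))"
    by (simp add: lookup_add assms sum.distrib)
  also have "\<dots> = lin f p + lin f q"
    by (subst (1 2) lin_superset[where S="?S"]) (use assms in auto)
  finally show ?thesis .
qed

lemma lin_single:
  assumes "\<And>m. f m 0 = 0"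
  shows "lin f (Poly_Mapping.single m c) = f m c"
  using assms by (simp add: lin_def)

lemma lin_zero: "lin f 0 = 0"
  by (simp add: lin_def)

definition tdeg :: "(nat \<Rightarrow>\<^sub>0 nat) \<Rightarrow> nat" where
  "tdeg m = (\<Sum>k\<in>Poly_Mapping.keys m. Poly_Mapping.lookup m k)"

lemma tdeg_superset:
  assumes "finite S" "Poly_Mapping.keys m \<subseteq> S"
  shows "tdeg m = (\<Sum>k\<in>S. Poly_Mapping.lookup m k)"
  unfolding tdeg_def
  by (rule sum.mono_neutral_left) (use assms in \<open>auto simp: in_keys_iff\<close>)

lemma tdeg_add: "tdeg (m + m') = tdeg m + tdeg m'"
proof -
  let ?S = "Poly_Mapping.keys m \<union> Poly_Mapping.keys m'"
  have "tdeg (m + m') = (\<Sum>k\<in>?S. Poly_Mapping.lookup (m+m') k)"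
    by (rule tdeg_superset) (use keys_add[of m m'] in auto)
  also have "\<dots> = (\<Sum>k\<in>?S. Poly_Mapping.lookup m k) + (\<Sum>k\<in>?S. Poly_Mapping.lookup m' k)"
    by (simp add: lookup_add sum.distrib)
  also have "\<dots> = tdeg m + tdeg m'"
    by (subst (1 2) tdeg_superset[where S="?S"]) auto
  finally show ?thesis .
qed

lemma tdeg_zero[simp]: "tdeg 0 = 0"
  by (simp add: tdeg_def)

lemma tdeg_single[simp]: "tdeg (Poly_Mapping.single i k) = k"
  by (simp add: tdeg_def)

lemma mono_split:
  fixes m :: "nat \<Rightarrow>\<^sub>0 nat"
  assumes "Poly_Mapping.lookup m i \<noteq> 0"
  shows "m = (m - Poly_Mapping.single i 1) + Poly_Mapping.single i 1"
proof (rule poly_mapping_eqI)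
  fix k
  show "Poly_Mapping.lookup m k = Poly_Mapping.lookup (m - Poly_Mapping.single i 1 + Poly_Mapping.single i 1) k"
  proof (cases "k = i")
    case True
    have "Poly_Mapping.lookup m i - 1 + 1 = Poly_Mapping.lookup m i" using assms by linarith
    then show ?thesis using True by (simp add: lookup_add lookup_minus lookup_single)
  qed (simp add: lookup_add lookup_minus lookup_single)
qed

lemma tdeg_minus1:
  fixes m :: "nat \<Rightarrow>\<^sub>0 nat"
  assumes "Poly_Mapping.lookup m i \<noteq> 0"
  shows "tdeg m = Suc (tdeg (m - Poly_Mapping.single i 1))"
  using tdeg_add[of "m - Poly_Mapping.single i 1" "Poly_Mapping.single i 1"] mono_split[OF assms] by simp

lemma keys_lin: "Poly_Mapping.keys (lin f p) \<subseteq> (\<Union>m\<in>Poly_Mapping.keys p. Poly_Mapping.keys (f m (Poly_Mapping.lookup p m)))"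
  unfolding lin_def by (rule keys_sum)

section \<open>Partial derivatives\<close>

definition dv :: "nat \<Rightarrow> 'a::comm_ring_1 mpoly \<Rightarrow> 'a mpoly" where
  "dv i p = lin (\<lambda>m c. Poly_Mapping.single (m - Poly_Mapping.single i 1) (of_nat (Poly_Mapping.lookup m i) * c)) p"

lemma dv_single: "dv i (Poly_Mapping.single m c) = Poly_Mapping.single (m - Poly_Mapping.single i 1) (of_nat (Poly_Mapping.lookup m i) * c)"
  by (simp add: dv_def lin_single)

lemma dv_add: "dv i (p + q) = dv i p + dv i q"
  unfolding dv_def by (rule lin_add) (simp_all add: distrib_left single_add)

lemma dv_zero[simp]: "dv i 0 = 0"
  by (simp add: dv_def lin_zero)

lemma dv_uminus: "dv i (- p) = - dv i p"
  by (metis add.right_inverse dv_zero minus_unique dv_add)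

lemma dv_diff: "dv i (p - q) = dv i p - dv i q"
  using dv_add[of i p "-q"] by (simp add: dv_uminus)

lemma dv_sum: "dv i (sum f A) = (\<Sum>x\<in>A. dv i (f x))"
  by (induction A rule: infinite_finite_induct) (auto simp: dv_add)

lemma mono_minus_add1:
  fixes m m' :: "nat \<Rightarrow>\<^sub>0 nat"
  assumes "Poly_Mapping.lookup m i \<noteq> 0"
  shows "(m + m') - Poly_Mapping.single i 1 = (m - Poly_Mapping.single i 1) + m'"
proof (rule poly_mapping_eqI)
  fix k
  show "Poly_Mapping.lookup (m + m' - Poly_Mapping.single i 1) k = Poly_Mapping.lookup (m - Poly_Mapping.single i 1 + m') k"
  proof (cases "k = i")
    case True
    then show ?thesis using assms by (simp add: lookup_add lookup_minus)
  qed (simp add: lookup_add lookup_minus lookup_single)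
qed

lemma mono_minus_add2:
  fixes m m' :: "nat \<Rightarrow>\<^sub>0 nat"
  assumes "Poly_Mapping.lookup m i = 0"
  shows "(m + m') - Poly_Mapping.single i 1 = m + (m' - Poly_Mapping.single i 1)"
proof (rule poly_mapping_eqI)
  fix k
  show "Poly_Mapping.lookup (m + m' - Poly_Mapping.single i 1) k = Poly_Mapping.lookup (m + (m' - Poly_Mapping.single i 1)) k"
  proof (cases "k = i")
    case True
    then show ?thesis using assms by (simp add: lookup_add lookup_minus)
  qed (simp add: lookup_add lookup_minus lookup_single)
qed

lemma dv_mono_mult:
  fixes a b :: "'a::comm_ring_1"
  shows "dv i (Poly_Mapping.single m a * Poly_Mapping.single m' b)
    = dv i (Poly_Mapping.single m a) * Poly_Mapping.single m' b + Poly_Mapping.single m a * dv i (Poly_Mapping.single m' b)"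
proof -
  let ?e = "Poly_Mapping.single i 1 :: nat \<Rightarrow>\<^sub>0 nat"
  have L: "dv i (Poly_Mapping.single m a * Poly_Mapping.single m' b) =
     Poly_Mapping.single (m + m' - ?e) (of_nat (Poly_Mapping.lookup m i) * (a * b))
   + Poly_Mapping.single (m + m' - ?e) (of_nat (Poly_Mapping.lookup m' i) * (a * b))"
    by (simp add: mult_single dv_single lookup_add distrib_right single_add)
  have R: "dv i (Poly_Mapping.single m a) * Poly_Mapping.single m' b + Poly_Mapping.single m a * dv i (Poly_Mapping.single m' b)
    = Poly_Mapping.single (m - ?e + m') (of_nat (Poly_Mapping.lookup m i) * (a * b))
    + Poly_Mapping.single (m + (m' - ?e)) (of_nat (Poly_Mapping.lookup m' i) * (a * b))"
    by (simp add: mult_single dv_single algebra_simps)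
  show ?thesis
  proof (cases "Poly_Mapping.lookup m i = 0")
    case True
    then show ?thesis unfolding L R using mono_minus_add2[OF True, of m'] by simp
  next
    case False
    note F = mono_minus_add1[OF False, of m']
    show ?thesis
    proof (cases "Poly_Mapping.lookup m' i = 0")
      case True
      then show ?thesis unfolding L R using F by simp
    next
      case False2: False
      have "m + m' - ?e = m + (m' - ?e)"
        using mono_minus_add1[OF False2, of m] by (simp add: add.commute)
      then show ?thesis unfolding L R using F by simp
    qed
  qed
qed

lemma dv_mult: "dv i (p * q) = dv i p * q + p * dv i q"
proof (induction p rule: pm_induct)
  case zero
  then show ?case by simp
next
  case (add f m c)
  have "dv i (Poly_Mapping.single m c * q) = dv i (Poly_Mapping.single m c) * q + Poly_Mapping.single m c * dv i q"
  proof (induction q rule: pm_induct)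
    case zero
    then show ?case by simp
  next
    case (add g m' c')
    then show ?case by (simp add: distrib_left dv_add dv_mono_mult algebra_simps)
  qed
  then show ?case using add(3) by (simp add: distrib_right dv_add algebra_simps)
qed

lemma dv_Const[simp]: "dv i (Const c) = 0"
  by (simp add: Const_def dv_single)

lemma dv_of_nat[simp]: "dv i (of_nat k) = 0"
  by (metis Const_def dv_Const single_of_nat)

lemma dv_of_int[simp]: "dv i (of_int k) = 0"
  by (metis Const_def dv_Const single_of_int)

lemma dv_numeral[simp]: "dv i (numeral k) = 0"
  by (metis Const_def dv_Const single_numeral)

lemma dv_one[simp]: "dv i 1 = 0"
  by (metis dv_of_nat of_nat_1)

lemma dv_Var: "dv i (Var j) = (if i = j then 1 else 0)"
  by (auto simp: Var_def dv_single lookup_single when_def)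

lemma dv_power: "dv i (p ^ k) = of_nat k * p ^ (k - 1) * dv i p"
proof (induction k)
  case 0
  then show ?case by simp
next
  case (Suc k)
  then show ?case
    by (cases k) (simp_all add: dv_mult algebra_simps)
qed

section \<open>Scaling by a function of the total degree\<close>

definition sc :: "(nat \<Rightarrow> 'a::comm_ring_1) \<Rightarrow> 'a mpoly \<Rightarrow> 'a mpoly" where
  "sc g p = lin (\<lambda>m c. Poly_Mapping.single m (g (tdeg m) * c)) p"

lemma sc_single: "sc g (Poly_Mapping.single m c) = Poly_Mapping.single m (g (tdeg m) * c)"
  by (simp add: sc_def lin_single)

lemma sc_add: "sc g (p + q) = sc g p + sc g q"
  unfolding sc_def by (rule lin_add) (simp_all add: distrib_left single_add)

lemma sc_zero[simp]: "sc g 0 = 0"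
  by (simp add: sc_def lin_zero)

lemma sc_uminus: "sc g (- p) = - sc g p"
  by (metis add.right_inverse sc_zero minus_unique sc_add)

lemma sc_diff: "sc g (p - q) = sc g p - sc g q"
  using sc_add[of g p "-q"] by (simp add: sc_uminus)

lemma sc_sum: "sc g (sum f A) = (\<Sum>x\<in>A. sc g (f x))"
  by (induction A rule: infinite_finite_induct) (auto simp: sc_add)

lemma sc_Var_mult: "sc g (Var i * p) = Var i * sc (\<lambda>t. g (Suc t)) p"
proof (induction p rule: pm_induct)
  case zero
  then show ?case by simp
next
  case (add f m c)
  then show ?case
    by (simp add: distrib_left sc_add Var_def mult_single sc_single tdeg_add)
qed

lemma sc_Const_mult: "sc g (Const c * p) = Const c * sc g p"
proof (induction p rule: pm_induct)
  case zero
  then show ?case by simp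
next
  case (add f m c')
  then show ?case
    by (simp add: distrib_left sc_add Const_def mult_single sc_single algebra_simps)
qed

lemma sc_sc: "sc f (sc g p) = sc (\<lambda>t. f t * g t) p"
proof (induction p rule: pm_induct)
  case zero
  then show ?case by simp
next
  case (add h m c)
  then show ?case
    by (simp add: sc_add sc_single algebra_simps)
qed

lemma sc_const: "sc (\<lambda>_. c) p = Const c * p"
proof (induction p rule: pm_induct)
  case zero
  then show ?case by simp
next
  case (add h m c')
  then show ?case
    by (simp add: sc_add sc_single Const_def mult_single distrib_left)
qed

lemma sc_plus_fun: "sc f p + sc g p = sc (\<lambda>t. f t + g t) p"
proof (induction p rule: pm_induct)
  case zero
  then show ?case by simp
next
  case (add h m c)
  then show ?case
    by (simp add: sc_add sc_single distrib_right single_add algebra_simps)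
qed

lemma sc_minus_fun: "sc f p - sc g p = sc (\<lambda>t. f t - g t) p"
proof (induction p rule: pm_induct)
  case zero
  then show ?case by simp
next
  case (add h m c)
  then show ?case
    by (simp add: sc_add sc_single left_diff_distrib single_diff algebra_simps)
qed

lemma dv_sc: "dv i (sc g p) = sc (\<lambda>t. g (Suc t)) (dv i p)"
proof (induction p rule: pm_induct)
  case zero
  then show ?case by simp
next
  case (add h m c)
  have "dv i (sc g (Poly_Mapping.single m c)) = sc (\<lambda>t. g (Suc t)) (dv i (Poly_Mapping.single m c))"
  proof (cases "Poly_Mapping.lookup m i = 0")
    case True
    then show ?thesis by (simp add: sc_single dv_single)
  next
    case False
    then show ?thesis using tdeg_minus1[OF False] by (simp add: sc_single dv_single algebra_simps)
  qed
  then show ?case using add(3) by (simp add: sc_add dv_add)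
qed

lemma in_R_0[simp]: "in_R n 0"
  by (simp add: in_R_def)

lemma in_R_add: "in_R n p \<Longrightarrow> in_R n q \<Longrightarrow> in_R n (p + q)"
  unfolding in_R_def using keys_add[of p q] by blast

lemma keys_uminus_pm: "Poly_Mapping.keys (- p) = Poly_Mapping.keys (p :: 'a::ab_group_add mpoly)"
  by (auto simp: in_keys_iff)

lemma in_R_uminus: "in_R n p \<Longrightarrow> in_R n (- p)"
  unfolding in_R_def by (simp add: keys_uminus_pm)

lemma in_R_diff: "in_R n p \<Longrightarrow> in_R n q \<Longrightarrow> in_R n (p - q)"
  using in_R_add[of n p "-q"] in_R_uminus[of n q] by simp

lemma in_R_mult: "in_R n p \<Longrightarrow> in_R n q \<Longrightarrow> in_R n (p * q)"
  unfolding in_R_def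
proof (intro allI impI)
  fix m
  assume p: "\<forall>m. m \<in> Poly_Mapping.keys p \<longrightarrow> Poly_Mapping.keys m \<subseteq> {1..n}"
    and q: "\<forall>m. m \<in> Poly_Mapping.keys q \<longrightarrow> Poly_Mapping.keys m \<subseteq> {1..n}"
    and m: "m \<in> Poly_Mapping.keys (p * q)"
  then obtain a b where "m = a + b" "a \<in> Poly_Mapping.keys p" "b \<in> Poly_Mapping.keys q"
    using keys_mult[of p q] by blast
  then show "Poly_Mapping.keys m \<subseteq> {1..n}"
    using p q keys_add[of a b] by blast
qed

lemma in_R_sum: "(\<And>x. x \<in> A \<Longrightarrow> in_R n (f x)) \<Longrightarrow> in_R n (sum f A)"
  by (induction A rule: infinite_finite_induct) (auto intro: in_R_add)

lemma in_R_single: "Poly_Mapping.keys m \<subseteq> {1..n} \<Longrightarrow> in_R n (Poly_Mapping.single m c)"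
  by (simp add: in_R_def)

lemma in_R_Var: "i \<in> {1..n} \<Longrightarrow> in_R n (Var i)"
  unfolding Var_def by (rule in_R_single) simp

lemma in_R_Const[simp]: "in_R n (Const c)"
  unfolding Const_def by (rule in_R_single) simp

lemma in_R_of_nat[simp]: "in_R n (of_nat k)"
  by (metis Const_def in_R_Const single_of_nat)

lemma in_R_of_int[simp]: "in_R n (of_int k)"
  by (metis Const_def in_R_Const single_of_int)

lemma in_R_numeral[simp]: "in_R n (numeral k)"
  by (metis Const_def in_R_Const single_numeral)

lemma in_R_one[simp]: "in_R n 1"
  by (metis in_R_of_nat of_nat_1)

lemma in_R_power: "in_R n p \<Longrightarrow> in_R n (p ^ k)"
  by (induction k) (auto intro: in_R_mult)

lemma keys_minus_mono: "Poly_Mapping.keys (m - m') \<subseteq> Poly_Mapping.keys (m :: nat \<Rightarrow>\<^sub>0 nat)"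
  by (auto simp: in_keys_iff lookup_minus)

lemma in_R_dv: "in_R n p \<Longrightarrow> in_R n (dv i p)"
  unfolding in_R_def dv_def
proof (intro allI impI)
  fix m
  assume p: "\<forall>m. m \<in> Poly_Mapping.keys p \<longrightarrow> Poly_Mapping.keys m \<subseteq> {1..n}"
    and m: "m \<in> Poly_Mapping.keys (lin (\<lambda>m c. Poly_Mapping.single (m - Poly_Mapping.single i 1) (of_nat (Poly_Mapping.lookup m i) * c)) p)"
  from subsetD[OF keys_lin m] obtain m0 where "m0 \<in> Poly_Mapping.keys p" "m \<in> Poly_Mapping.keys (Poly_Mapping.single (m0 - Poly_Mapping.single i 1) (of_nat (Poly_Mapping.lookup m0 i) * Poly_Mapping.lookup p m0))"
    by blast
  then have "m = m0 - Poly_Mapping.single i 1" by (simp split: if_splits)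
  then show "Poly_Mapping.keys m \<subseteq> {1..n}"
    using p \<open>m0 \<in> Poly_Mapping.keys p\<close> keys_minus_mono[of m0 "Poly_Mapping.single i 1"] by blast
qed

lemma in_R_sc: "in_R n p \<Longrightarrow> in_R n (sc g p)"
  unfolding in_R_def sc_def
proof (intro allI impI)
  fix m
  assume p: "\<forall>m. m \<in> Poly_Mapping.keys p \<longrightarrow> Poly_Mapping.keys m \<subseteq> {1..n}"
    and m: "m \<in> Poly_Mapping.keys (lin (\<lambda>m c. Poly_Mapping.single m (g (tdeg m) * c)) p)"
  from subsetD[OF keys_lin m] obtain m0 where "m0 \<in> Poly_Mapping.keys p" "m \<in> Poly_Mapping.keys (Poly_Mapping.single m0 (g (tdeg m0) * Poly_Mapping.lookup p m0))"
    by blast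
  then have "m = m0" by (simp split: if_splits)
  then show "Poly_Mapping.keys m \<subseteq> {1..n}"
    using p \<open>m0 \<in> Poly_Mapping.keys p\<close> by blast
qed

lemma in_R_ell: "in_R n (ell n)"
  unfolding ell_def by (rule in_R_sum) (simp add: in_R_Var)

section \<open>Euler identity\<close>

lemma single_sum: "Poly_Mapping.single m (sum f A) = (\<Sum>x\<in>A. Poly_Mapping.single m (f x))"
  by (induction A rule: infinite_finite_induct) (auto simp: single_add)

lemma var_dv_single:
  "Var i * dv i (Poly_Mapping.single m c) = Poly_Mapping.single m (of_nat (Poly_Mapping.lookup m i) * (c :: 'a::comm_ring_1))"
proof (cases "Poly_Mapping.lookup m i = 0")
  case True
  then show ?thesis by (simp add: dv_single)
next
  case False
  then show ?thesis
    using mono_split[OF False] by (simp add: dv_single Var_def mult_single add.commute)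
qed

lemma keys_single_add:
  "m \<notin> Poly_Mapping.keys f \<Longrightarrow> c \<noteq> 0 \<Longrightarrow> Poly_Mapping.keys (Poly_Mapping.single m c + f) = insert m (Poly_Mapping.keys f)"
  by (auto simp: in_keys_iff lookup_add lookup_single when_def split: if_splits)

lemma euler:
  assumes "in_R n p"
  shows "(\<Sum>i=1..n. Var i * dv i p) = sc (\<lambda>t. of_nat t) p"
  using assms
proof (induction p rule: pm_induct)
  case zero
  then show ?case by simp
next
  case (add f m c)
  have K: "Poly_Mapping.keys (Poly_Mapping.single m c + f) = insert m (Poly_Mapping.keys f)"
    using keys_single_add[OF add(1,2)] .
  then have f: "in_R n f" and m: "Poly_Mapping.keys m \<subseteq> {1..n}"
    using add(4) by (auto simp: in_R_def)
  have "(\<Sum>i=1..n. Var i * dv i (Poly_Mapping.single m c)) = (\<Sum>i=1..n. Poly_Mapping.single m (of_nat (Poly_Mapping.lookup m i) * c))"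
    by (simp add: var_dv_single)
  also have "\<dots> = Poly_Mapping.single m ((\<Sum>i=1..n. of_nat (Poly_Mapping.lookup m i)) * c)"
    by (simp add: single_sum sum_distrib_right)
  also have "\<dots> = sc (\<lambda>t. of_nat t) (Poly_Mapping.single m c)"
    using tdeg_superset[of "{1..n}" m] m by (simp add: sc_single)
  finally have M: "(\<Sum>i=1..n. Var i * dv i (Poly_Mapping.single m c)) = sc (\<lambda>t. of_nat t) (Poly_Mapping.single m c)" .
  have "(\<Sum>i=1..n. Var i * dv i (Poly_Mapping.single m c + f))
      = (\<Sum>i=1..n. Var i * dv i (Poly_Mapping.single m c) + Var i * dv i f)"
    by (simp only: dv_add distrib_left)
  also have "\<dots> = (\<Sum>i=1..n. Var i * dv i (Poly_Mapping.single m c)) + (\<Sum>i=1..n. Var i * dv i f)"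
    by (rule sum.distrib)
  also have "\<dots> = sc (\<lambda>t. of_nat t) (Poly_Mapping.single m c) + sc (\<lambda>t. of_nat t) f"
    by (simp only: M add(3)[OF f])
  also have "\<dots> = sc (\<lambda>t. of_nat t) (Poly_Mapping.single m c + f)"
    by (simp only: sc_add)
  finally show ?case .
qed

section \<open>Ideals\<close>

lemma in_ideal_0: "in_ideal n S g 0"
  unfolding in_ideal_def by (rule exI[of _ "\<lambda>_. 0"]) simp

lemma in_ideal_add:
  assumes "in_ideal n S g p" "in_ideal n S g q"
  shows "in_ideal n S g (p + q)"
proof -
  obtain b1 where b1: "\<forall>i\<in>S. in_R n (b1 i)" "p = (\<Sum>i\<in>S. b1 i * g i)"
    using assms(1) by (auto simp: in_ideal_def)
  obtain b2 where b2: "\<forall>i\<in>S. in_R n (b2 i)" "q = (\<Sum>i\<in>S. b2 i * g i)"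
    using assms(2) by (auto simp: in_ideal_def)
  have "p + q = (\<Sum>i\<in>S. (b1 i + b2 i) * g i)" unfolding b1(2) b2(2) by (simp add: distrib_right sum.distrib)
  moreover have "\<forall>i\<in>S. in_R n (b1 i + b2 i)" using b1(1) b2(1) in_R_add by blast
  ultimately show ?thesis unfolding in_ideal_def by (intro exI[of _ "\<lambda>i. b1 i + b2 i"]) simp
qed

lemma in_ideal_mult:
  assumes "in_R n r" "in_ideal n S g p"
  shows "in_ideal n S g (r * p)"
proof -
  obtain b1 where b1: "\<forall>i\<in>S. in_R n (b1 i)" "p = (\<Sum>i\<in>S. b1 i * g i)"
    using assms(2) by (auto simp: in_ideal_def)
  have "r * p = (\<Sum>i\<in>S. (r * b1 i) * g i)" unfolding b1(2) by (simp add: sum_distrib_left mult.assoc)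
  moreover have "\<forall>i\<in>S. in_R n (r * b1 i)" using b1(1) assms(1) in_R_mult by blast
  ultimately show ?thesis unfolding in_ideal_def by (intro exI[of _ "\<lambda>i. r * b1 i"]) simp
qed

lemma in_ideal_uminus: "in_ideal n S g p \<Longrightarrow> in_ideal n S g (- p)"
  using in_ideal_mult[of n "-1" S g p] by (simp add: in_R_uminus)

lemma in_ideal_diff: "in_ideal n S g p \<Longrightarrow> in_ideal n S g q \<Longrightarrow> in_ideal n S g (p - q)"
  using in_ideal_add[of n S g p "-q"] in_ideal_uminus[of n S g q] by simp

lemma in_ideal_gen:
  assumes "finite S" "i \<in> S" "in_R n r"
  shows "in_ideal n S g (r * g i)"
proof -
  have "(\<Sum>j\<in>S. (if j = i then r else 0) * g j) = (\<Sum>j\<in>S. if j = i then r * g j else 0)"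
    by (rule sum.cong) auto
  then have "r * g i = (\<Sum>j\<in>S. (if j = i then r else 0) * g j)"
    using assms by simp
  moreover have "\<forall>j\<in>S. in_R n (if j = i then r else 0)" using assms by auto
  ultimately show ?thesis unfolding in_ideal_def by (intro exI[of _ "\<lambda>j. if j = i then r else 0"]) simp
qed

lemma in_ideal_sum:
  "(\<And>x. x \<in> A \<Longrightarrow> in_ideal n S g (f x)) \<Longrightarrow> in_ideal n S g (sum f A)"
proof (induction A rule: infinite_finite_induct)
  case (infinite A)
  then show ?case by (simp add: in_ideal_0)
next
  case empty
  then show ?case by (simp add: in_ideal_0)
next
  case (insert x F)
  then show ?case by (simp add: in_ideal_add)
qed

lemma in_ideal_mono:
  assumes "S \<subseteq> T" "finite T" "in_ideal n S g p"
  shows "in_ideal n T g p"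
proof -
  obtain b1 where b1: "\<forall>i\<in>S. in_R n (b1 i)" "p = (\<Sum>i\<in>S. b1 i * g i)"
    using assms(3) by (auto simp: in_ideal_def)
  define b where "b = (\<lambda>i. if i \<in> S then b1 i else 0)"
  have 1: "p = (\<Sum>i\<in>T. b i * g i)"
    unfolding b1(2) b_def by (rule sum.mono_neutral_cong_left) (use assms in auto)
  have 2: "\<forall>i\<in>T. in_R n (b i)" unfolding b_def using b1(1) by auto
  from 2 1 have "(\<forall>i\<in>T. in_R n (b i)) \<and> p = (\<Sum>i\<in>T. b i * g i)" by (rule conjI)
  then show ?thesis unfolding in_ideal_def by (rule exI[where x=b])
qed

lemma in_ideal_cong:
  assumes "\<And>i. i \<in> S \<Longrightarrow> g i = g' i"
  shows "in_ideal n S g p = in_ideal n S g' p"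
proof -
  have "\<And>b. (\<Sum>i\<in>S. b i * g i) = (\<Sum>i\<in>S. b i * g' i)"
    using assms by (intro sum.cong) auto
  then show ?thesis unfolding in_ideal_def by simp
qed

lemma dv_ell: "i \<in> {1..n} \<Longrightarrow> dv i (ell n) = 1"
proof -
  assume i: "i \<in> {1..n}"
  have "dv i (ell n) = (\<Sum>j=1..n. if i = j then 1 else 0)"
    unfolding ell_def by (simp add: dv_sum dv_Var)
  also have "\<dots> = 1" using i by simp
  finally show ?thesis .
qed

lemma sum_Var_mult: "(\<Sum>i=1..n. Var i * q) = ell n * q"
  unfolding ell_def by (simp add: sum_distrib_right)

lemma shift0: "(of_nat m :: 'a::comm_ring_1) * (x ^ (m - 1) * x) = of_nat m * x ^ m"
  by (cases m) (simp_all add: power_Suc2)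

lemma shift1: "(of_nat (m - 1) :: 'a::comm_ring_1) * (x ^ (m - 2) * x) = of_nat (m - 1) * x ^ (m - 1)"
proof -
  have eq: "m - 2 = m - 1 - 1" by simp
  show ?thesis using shift0[of "m - 1" x] by (simp only: eq)
qed

lemma shift2: "(of_nat (m - 2) :: 'a::comm_ring_1) * (x ^ (m - 3) * x) = of_nat (m - 2) * x ^ (m - 2)"
proof -
  have eq: "m - 3 = m - 2 - 1" by simp
  show ?thesis using shift0[of "m - 2" x] by (simp only: eq)
qed

definition th :: "nat \<Rightarrow> 'a::comm_ring_1 mpoly \<Rightarrow> 'a mpoly" where
  "th n p = (\<Sum>i=1..n. Var i * dv i p)"

definition Fop :: "nat \<Rightarrow> (nat \<Rightarrow> nat) \<Rightarrow> 'a::comm_ring_1 mpoly \<Rightarrow> 'a mpoly" where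
  "Fop n e p = (\<Sum>i=1..n. of_nat (e i - 1) * dv i p - Var i * dv i (dv i p))"

definition Dop :: "nat \<Rightarrow> (nat \<Rightarrow> nat) \<Rightarrow> 'a::comm_ring_1 mpoly \<Rightarrow> 'a mpoly" where
  "Dop n e p = (\<Sum>i=1..n. 3 * of_nat (e i - 1) * dv i (dv i p) - 2 * (Var i * dv i (dv i (dv i p))))"

lemma Fop_add: "Fop n e (p + q) = Fop n e p + Fop n e q"
  unfolding Fop_def sum.distrib[symmetric] by (rule sum.cong) (simp_all add: dv_add algebra_simps)

lemma Fop_zero: "Fop n e 0 = 0"
  by (simp add: Fop_def)

lemma Fop_sum: "Fop n e (sum f A) = (\<Sum>x\<in>A. Fop n e (f x))"
  by (induction A rule: infinite_finite_induct) (auto simp: Fop_add Fop_zero)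

lemma Dop_add: "Dop n e (p + q) = Dop n e p + Dop n e q"
  unfolding Dop_def sum.distrib[symmetric] by (rule sum.cong) (simp_all add: dv_add algebra_simps)

lemma Dop_zero: "Dop n e 0 = 0"
  by (simp add: Dop_def)

lemma Dop_sum: "Dop n e (sum f A) = (\<Sum>x\<in>A. Dop n e (f x))"
  by (induction A rule: infinite_finite_induct) (auto simp: Dop_add Dop_zero)

lemma sc_of_nat_mult: "sc g (of_nat k * p) = of_nat k * sc g p"
  by (metis Const_def sc_Const_mult single_of_nat)

lemma sc_numeral_mult: "sc g (numeral k * p) = numeral k * sc g p"
  by (metis Const_def sc_Const_mult single_numeral)

lemma Fop_sc: "Fop n e (sc g p) = sc (\<lambda>t. g (Suc t)) (Fop n e p)"
  unfolding Fop_def by (simp add: sc_sum sc_diff sc_of_nat_mult sc_Var_mult dv_sc)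

lemma in_R_Fop: "in_R n p \<Longrightarrow> in_R n (Fop n e p)"
  unfolding Fop_def by (auto intro!: in_R_sum in_R_diff in_R_mult in_R_dv in_R_Var)

lemma in_R_th: "in_R n p \<Longrightarrow> in_R n (th n p)"
  unfolding th_def by (auto intro!: in_R_sum in_R_diff in_R_mult in_R_dv in_R_Var)

lemma th_sc: "in_R n p \<Longrightarrow> th n p = sc (\<lambda>t. of_nat t) p"
  unfolding th_def by (rule euler)

lemma F2_gen:
  assumes Y: "dv i Y = 1"
  shows "of_nat c * dv i (Y ^ m * a) - Var i * dv i (dv i (Y ^ m * a))
    = Y ^ m * (of_nat c * dv i a - Var i * dv i (dv i a))
      + of_nat m * Y ^ (m - 1) * (of_nat c * a - 2 * (Var i * dv i a))
      - of_nat m * of_nat (m - 1) * Y ^ (m - 2) * (Var i * a)"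
  by (simp add: Y dv_mult dv_power dv_add dv_diff algebra_simps numeral_2_eq_2)

lemma D2_gen:
  assumes Y: "dv i Y = 1"
  shows "3 * of_nat c * dv i (dv i (Y ^ m * a)) - 2 * (Var i * dv i (dv i (dv i (Y ^ m * a))))
    = Y ^ m * (3 * of_nat c * dv i (dv i a) - 2 * (Var i * dv i (dv i (dv i a))))
      + 6 * of_nat m * Y ^ (m - 1) * (of_nat c * dv i a - Var i * dv i (dv i a))
      + of_nat m * of_nat (m - 1) * Y ^ (m - 2) * (3 * of_nat c * a - 6 * (Var i * dv i a))
      - 2 * of_nat m * of_nat (m - 1) * of_nat (m - 2) * Y ^ (m - 3) * (Var i * a)"
  by (simp add: Y dv_mult dv_power dv_add dv_diff algebra_simps numeral_2_eq_2 numeral_3_eq_3)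

lemma F1_k:
  fixes s :: "'a::comm_ring_1 mpoly"
  shows "of_nat (E - 1) * dv k (Var k ^ E * s) - Var k * dv k (dv k (Var k ^ E * s))
    = Var k ^ E * (of_nat (E - 1) * dv k s - Var k * dv k (dv k s)) - 2 * of_nat E * Var k ^ E * dv k s"
proof -
  let ?X = "Var k :: 'a mpoly"
  have "of_nat (E - 1) * dv k (?X ^ E * s) - ?X * dv k (dv k (?X ^ E * s))
    = ?X ^ E * (of_nat (E - 1) * dv k s - ?X * dv k (dv k s))
      + of_nat E * ?X ^ (E - 1) * (of_nat (E - 1) * s - 2 * (?X * dv k s))
      - of_nat E * of_nat (E - 1) * ?X ^ (E - 2) * (?X * s)"
    by (rule F2_gen) (simp add: dv_Var)
  also have "\<dots> = ?X ^ E * (of_nat (E - 1) * dv k s - ?X * dv k (dv k s))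
      + of_nat E * of_nat (E - 1) * ?X ^ (E - 1) * s
      - 2 * dv k s * (of_nat E * (?X ^ (E - 1) * ?X))
      - of_nat E * s * (of_nat (E - 1) * (?X ^ (E - 2) * ?X))"
    by (simp add: algebra_simps)
  also have "\<dots> = ?X ^ E * (of_nat (E - 1) * dv k s - ?X * dv k (dv k s))
      + of_nat E * of_nat (E - 1) * ?X ^ (E - 1) * s
      - 2 * dv k s * (of_nat E * ?X ^ E)
      - of_nat E * s * (of_nat (E - 1) * ?X ^ (E - 1))"
    by (simp only: shift0 shift1)
  also have "\<dots> = ?X ^ E * (of_nat (E - 1) * dv k s - ?X * dv k (dv k s)) - 2 * of_nat E * ?X ^ E * dv k s"
    by (simp add: algebra_simps)
  finally show ?thesis .
qed

lemma coefE: "(of_nat (E * (E - 1) * (E + 1)) :: 'a::comm_ring_1) = of_nat E * of_nat (E - 1) * (3 * of_nat (E - 1) - 2 * of_nat (E - 2))"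
proof (cases "E \<ge> 2")
  case True
  then obtain k where k: "E = k + 2" by (metis add.commute le_iff_add)
  then show ?thesis by (simp add: algebra_simps)
next
  case False
  then have "E = 0 \<or> E = 1" by auto
  then show ?thesis by auto
qed

lemma D1_k:
  fixes s :: "'a::comm_ring_1 mpoly"
  shows "3 * of_nat (E - 1) * dv k (dv k (Var k ^ E * s)) - 2 * (Var k * dv k (dv k (dv k (Var k ^ E * s))))
    = Var k ^ E * (3 * of_nat (E - 1) * dv k (dv k s) - 2 * (Var k * dv k (dv k (dv k s))))
      - 6 * of_nat E * Var k ^ E * dv k (dv k s)
      + of_nat (E * (E - 1) * (E + 1)) * Var k ^ (E - 2) * s"
proof -
  let ?X = "Var k :: 'a mpoly"
  let ?D = "3 * of_nat (E - 1) * dv k (dv k s) - 2 * (?X * dv k (dv k (dv k s)))"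
  have "3 * of_nat (E - 1) * dv k (dv k (?X ^ E * s)) - 2 * (?X * dv k (dv k (dv k (?X ^ E * s))))
    = ?X ^ E * ?D
      + 6 * of_nat E * ?X ^ (E - 1) * (of_nat (E - 1) * dv k s - ?X * dv k (dv k s))
      + of_nat E * of_nat (E - 1) * ?X ^ (E - 2) * (3 * of_nat (E - 1) * s - 6 * (?X * dv k s))
      - 2 * of_nat E * of_nat (E - 1) * of_nat (E - 2) * ?X ^ (E - 3) * (?X * s)"
    by (rule D2_gen) (simp add: dv_Var)
  also have "\<dots> = ?X ^ E * ?D
      + 6 * of_nat E * of_nat (E - 1) * ?X ^ (E - 1) * dv k s
      - 6 * dv k (dv k s) * (of_nat E * (?X ^ (E - 1) * ?X))
      + 3 * of_nat E * of_nat (E - 1) * of_nat (E - 1) * ?X ^ (E - 2) * s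
      - 6 * of_nat E * dv k s * (of_nat (E - 1) * (?X ^ (E - 2) * ?X))
      - 2 * of_nat E * of_nat (E - 1) * s * (of_nat (E - 2) * (?X ^ (E - 3) * ?X))"
    by (simp add: algebra_simps)
  also have "\<dots> = ?X ^ E * ?D
      + 6 * of_nat E * of_nat (E - 1) * ?X ^ (E - 1) * dv k s
      - 6 * dv k (dv k s) * (of_nat E * ?X ^ E)
      + 3 * of_nat E * of_nat (E - 1) * of_nat (E - 1) * ?X ^ (E - 2) * s
      - 6 * of_nat E * dv k s * (of_nat (E - 1) * ?X ^ (E - 1))
      - 2 * of_nat E * of_nat (E - 1) * s * (of_nat (E - 2) * ?X ^ (E - 2))"
    by (simp only: shift0 shift1 shift2)
  also have "\<dots> = ?X ^ E * ?D - 6 * of_nat E * ?X ^ E * dv k (dv k s)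
      + (of_nat E * of_nat (E - 1) * (3 * of_nat (E - 1) - 2 * of_nat (E - 2))) * ?X ^ (E - 2) * s"
    by (simp add: algebra_simps)
  also have "\<dots> = ?X ^ E * ?D - 6 * of_nat E * ?X ^ E * dv k (dv k s)
      + of_nat (E * (E - 1) * (E + 1)) * ?X ^ (E - 2) * s"
    by (simp only: coefE)
  finally show ?thesis .
qed

lemma F1_other:
  assumes "i \<noteq> k"
  shows "of_nat c * dv i (Var k ^ E * s) - Var i * dv i (dv i (Var k ^ E * s))
    = Var k ^ E * (of_nat c * dv i s - Var i * dv i (dv i s))"
  using assms by (simp add: dv_mult dv_power dv_Var dv_add dv_diff algebra_simps)

lemma D1_other:
  assumes "i \<noteq> k"
  shows "3 * of_nat c * dv i (dv i (Var k ^ E * s)) - 2 * (Var i * dv i (dv i (dv i (Var k ^ E * s))))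
    = Var k ^ E * (3 * of_nat c * dv i (dv i s) - 2 * (Var i * dv i (dv i (dv i s))))"
  using assms by (simp add: dv_mult dv_power dv_Var dv_add dv_diff algebra_simps)

lemma sum_if_delta: "finite A \<Longrightarrow> k \<in> A \<Longrightarrow> (\<Sum>i\<in>A. (if i = k then c else 0)) = c"
  by simp

lemma F1:
  assumes k: "k \<in> {1..n}"
  shows "Fop n e (Var k ^ e k * s) = Var k ^ e k * (Fop n e s - 2 * of_nat (e k) * dv k s)"
proof -
  have "Fop n e (Var k ^ e k * s) = (\<Sum>i=1..n. Var k ^ e k * (of_nat (e i - 1) * dv i s - Var i * dv i (dv i s))
       - (if i = k then 2 * of_nat (e k) * Var k ^ e k * dv k s else 0))"
    unfolding Fop_def
  proof (rule sum.cong)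
    fix i assume "i \<in> {1..n}"
    show "of_nat (e i - 1) * dv i (Var k ^ e k * s) - Var i * dv i (dv i (Var k ^ e k * s))
       = Var k ^ e k * (of_nat (e i - 1) * dv i s - Var i * dv i (dv i s))
       - (if i = k then 2 * of_nat (e k) * Var k ^ e k * dv k s else 0)"
    proof (cases "i = k")
      case True
      then show ?thesis using F1_k[of "e k" k s] by simp
    next
      case False
      then show ?thesis using F1_other[OF False] by simp
    qed
  qed simp
  also have "\<dots> = Var k ^ e k * Fop n e s - 2 * of_nat (e k) * Var k ^ e k * dv k s"
    using k by (simp add: sum_subtractf sum_distrib_left[symmetric] Fop_def)
  finally show ?thesis by (simp add: algebra_simps)
qed

lemma D1:
  assumes k: "k \<in> {1..n}"
  shows "Dop n e (Var k ^ e k * s) = Var k ^ e k * (Dop n e s - 6 * of_nat (e k) * dv k (dv k s))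
      + of_nat (e k * (e k - 1) * (e k + 1)) * Var k ^ (e k - 2) * s"
proof -
  have "Dop n e (Var k ^ e k * s) = (\<Sum>i=1..n. Var k ^ e k * (3 * of_nat (e i - 1) * dv i (dv i s) - 2 * (Var i * dv i (dv i (dv i s))))
       + (if i = k then - 6 * of_nat (e k) * Var k ^ e k * dv k (dv k s) + of_nat (e k * (e k - 1) * (e k + 1)) * Var k ^ (e k - 2) * s else 0))"
    unfolding Dop_def
  proof (rule sum.cong)
    fix i assume "i \<in> {1..n}"
    show "3 * of_nat (e i - 1) * dv i (dv i (Var k ^ e k * s)) - 2 * (Var i * dv i (dv i (dv i (Var k ^ e k * s))))
       = Var k ^ e k * (3 * of_nat (e i - 1) * dv i (dv i s) - 2 * (Var i * dv i (dv i (dv i s))))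
       + (if i = k then - 6 * of_nat (e k) * Var k ^ e k * dv k (dv k s) + of_nat (e k * (e k - 1) * (e k + 1)) * Var k ^ (e k - 2) * s else 0)"
    proof (cases "i = k")
      case True
      then show ?thesis using D1_k[of "e k" k s] by simp
    next
      case False
      then show ?thesis using D1_other[OF False] by simp
    qed
  qed simp
  also have "\<dots> = Var k ^ e k * Dop n e s + (- 6 * of_nat (e k) * Var k ^ e k * dv k (dv k s) + of_nat (e k * (e k - 1) * (e k + 1)) * Var k ^ (e k - 2) * s)"
    using k by (simp only: sum.distrib sum_distrib_left[symmetric] Dop_def sum_if_delta finite_atLeastAtMost)
  finally show ?thesis by (simp add: algebra_simps)
qed

lemma sum_coef_th: "(\<Sum>i=1..n. of_nat (e i - 1) * a - 2 * (Var i * dv i a)) = of_nat (\<Sum>i=1..n. e i - 1) * a - 2 * th n a"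
  by (simp add: sum_subtractf sum_distrib_right sum_distrib_left th_def)

lemma sum_coef_th3: "(\<Sum>i=1..n. 3 * of_nat (e i - 1) * a - 6 * (Var i * dv i a)) = 3 * of_nat (\<Sum>i=1..n. e i - 1) * a - 6 * th n a"
  by (simp add: sum_subtractf sum_distrib_right sum_distrib_left th_def mult.assoc)

lemma F2:
  "Fop n e (ell n ^ m * a) = ell n ^ m * Fop n e a
     + of_nat m * ell n ^ (m - 1) * (of_nat (\<Sum>i=1..n. e i - 1) * a - 2 * th n a)
     - of_nat m * of_nat (m - 1) * ell n ^ (m - 1) * a"
proof -
  let ?L = "ell n :: 'a mpoly"
  have "Fop n e (?L ^ m * a) = (\<Sum>i=1..n. ?L ^ m * (of_nat (e i - 1) * dv i a - Var i * dv i (dv i a))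
      + (of_nat m * ?L ^ (m - 1)) * (of_nat (e i - 1) * a - 2 * (Var i * dv i a))
      - (of_nat m * of_nat (m - 1) * ?L ^ (m - 2)) * (Var i * a))"
    unfolding Fop_def
  proof (rule sum.cong)
    fix i assume i: "i \<in> {1..n}"
    show "of_nat (e i - 1) * dv i (?L ^ m * a) - Var i * dv i (dv i (?L ^ m * a)) =
      ?L ^ m * (of_nat (e i - 1) * dv i a - Var i * dv i (dv i a))
      + (of_nat m * ?L ^ (m - 1)) * (of_nat (e i - 1) * a - 2 * (Var i * dv i a))
      - (of_nat m * of_nat (m - 1) * ?L ^ (m - 2)) * (Var i * a)"
      using F2_gen[OF dv_ell[OF i], of "e i - 1" m a] by (simp add: mult.assoc)
  qed simp
  also have "\<dots> = ?L ^ m * (\<Sum>i=1..n. of_nat (e i - 1) * dv i a - Var i * dv i (dv i a))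
      + (of_nat m * ?L ^ (m - 1)) * (\<Sum>i=1..n. of_nat (e i - 1) * a - 2 * (Var i * dv i a))
      - (of_nat m * of_nat (m - 1) * ?L ^ (m - 2)) * (\<Sum>i=1..n. Var i * a)"
    by (subst sum_subtractf, subst sum.distrib, simp only: sum_distrib_left)
  also have "\<dots> = ?L ^ m * Fop n e a
      + (of_nat m * ?L ^ (m - 1)) * (of_nat (\<Sum>i=1..n. e i - 1) * a - 2 * th n a)
      - of_nat m * a * (of_nat (m - 1) * (?L ^ (m - 2) * ?L))"
    by (simp only: Fop_def sum_coef_th sum_Var_mult) (simp add: algebra_simps)
  also have "\<dots> = ?L ^ m * Fop n e a
      + (of_nat m * ?L ^ (m - 1)) * (of_nat (\<Sum>i=1..n. e i - 1) * a - 2 * th n a)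
      - of_nat m * a * (of_nat (m - 1) * ?L ^ (m - 1))"
    by (simp only: shift1)
  finally show ?thesis by (simp add: algebra_simps)
qed

lemma D2:
  "Dop n e (ell n ^ m * a) = ell n ^ m * Dop n e a
     + 6 * of_nat m * ell n ^ (m - 1) * Fop n e a
     + of_nat m * of_nat (m - 1) * ell n ^ (m - 2) * (3 * of_nat (\<Sum>i=1..n. e i - 1) * a - 6 * th n a)
     - 2 * of_nat m * of_nat (m - 1) * of_nat (m - 2) * ell n ^ (m - 2) * a"
proof -
  let ?L = "ell n :: 'a mpoly"
  have "Dop n e (?L ^ m * a) = (\<Sum>i=1..n. ?L ^ m * (3 * of_nat (e i - 1) * dv i (dv i a) - 2 * (Var i * dv i (dv i (dv i a))))
      + (6 * of_nat m * ?L ^ (m - 1)) * (of_nat (e i - 1) * dv i a - Var i * dv i (dv i a))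
      + (of_nat m * of_nat (m - 1) * ?L ^ (m - 2)) * (3 * of_nat (e i - 1) * a - 6 * (Var i * dv i a))
      - (2 * of_nat m * of_nat (m - 1) * of_nat (m - 2) * ?L ^ (m - 3)) * (Var i * a))"
    unfolding Dop_def
  proof (rule sum.cong)
    fix i assume i: "i \<in> {1..n}"
    show "3 * of_nat (e i - 1) * dv i (dv i (?L ^ m * a)) - 2 * (Var i * dv i (dv i (dv i (?L ^ m * a)))) =
      ?L ^ m * (3 * of_nat (e i - 1) * dv i (dv i a) - 2 * (Var i * dv i (dv i (dv i a))))
      + (6 * of_nat m * ?L ^ (m - 1)) * (of_nat (e i - 1) * dv i a - Var i * dv i (dv i a))
      + (of_nat m * of_nat (m - 1) * ?L ^ (m - 2)) * (3 * of_nat (e i - 1) * a - 6 * (Var i * dv i a))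
      - (2 * of_nat m * of_nat (m - 1) * of_nat (m - 2) * ?L ^ (m - 3)) * (Var i * a)"
      using D2_gen[OF dv_ell[OF i], of "e i - 1" m a] by (simp add: mult.assoc)
  qed simp
  also have "\<dots> = ?L ^ m * (\<Sum>i=1..n. 3 * of_nat (e i - 1) * dv i (dv i a) - 2 * (Var i * dv i (dv i (dv i a))))
      + (6 * of_nat m * ?L ^ (m - 1)) * (\<Sum>i=1..n. of_nat (e i - 1) * dv i a - Var i * dv i (dv i a))
      + (of_nat m * of_nat (m - 1) * ?L ^ (m - 2)) * (\<Sum>i=1..n. 3 * of_nat (e i - 1) * a - 6 * (Var i * dv i a))
      - (2 * of_nat m * of_nat (m - 1) * of_nat (m - 2) * ?L ^ (m - 3)) * (\<Sum>i=1..n. Var i * a)"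
    by (subst sum_subtractf, subst sum.distrib, subst sum.distrib, simp only: sum_distrib_left)
  also have "\<dots> = ?L ^ m * Dop n e a
      + (6 * of_nat m * ?L ^ (m - 1)) * Fop n e a
      + (of_nat m * of_nat (m - 1) * ?L ^ (m - 2)) * (3 * of_nat (\<Sum>i=1..n. e i - 1) * a - 6 * th n a)
      - 2 * of_nat m * of_nat (m - 1) * a * (of_nat (m - 2) * (?L ^ (m - 3) * ?L))"
    by (simp only: Dop_def Fop_def sum_coef_th3 sum_Var_mult) (simp add: algebra_simps)
  also have "\<dots> = ?L ^ m * Dop n e a
      + (6 * of_nat m * ?L ^ (m - 1)) * Fop n e a
      + (of_nat m * of_nat (m - 1) * ?L ^ (m - 2)) * (3 * of_nat (\<Sum>i=1..n. e i - 1) * a - 6 * th n a)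
      - 2 * of_nat m * of_nat (m - 1) * a * (of_nat (m - 2) * ?L ^ (m - 2))"
    by (simp only: shift2)
  finally show ?thesis by (simp add: algebra_simps)
qed

definition Gn :: "nat \<Rightarrow> (nat \<Rightarrow> nat) \<Rightarrow> nat \<Rightarrow> nat \<Rightarrow> 'a::comm_ring_1 mpoly" where
  "Gn n e d i = (if i \<le> n then Var i ^ e i else ell n ^ d)"

abbreviation inJ :: "nat \<Rightarrow> (nat \<Rightarrow> nat) \<Rightarrow> 'a::comm_ring_1 mpoly \<Rightarrow> bool" where
  "inJ n e p \<equiv> in_ideal n {1..n} (\<lambda>i. Var i ^ e i) p"

abbreviation inI :: "nat \<Rightarrow> (nat \<Rightarrow> nat) \<Rightarrow> nat \<Rightarrow> 'a::comm_ring_1 mpoly \<Rightarrow> bool" where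
  "inI n e d p \<equiv> in_ideal n {1..n+1} (Gn n e d) p"

lemma inJ_inI: "inJ n e p \<Longrightarrow> inI n e d p"
proof -
  assume "inJ n e p"
  then have "in_ideal n {1..n} (Gn n e d) p"
    by (subst in_ideal_cong[of _ _ "\<lambda>i. Var i ^ e i"]) (auto simp: Gn_def)
  then show ?thesis by (rule in_ideal_mono[rotated 2]) auto
qed

lemma inI_L: "in_R n r \<Longrightarrow> inI n e d (ell n ^ d * r)"
  using in_ideal_gen[of "{1..n+1}" "n+1" n r "Gn n e d"] by (simp add: Gn_def mult.commute)

lemma inI_X: "k \<in> {1..n} \<Longrightarrow> in_R n r \<Longrightarrow> inI n e d (Var k ^ e k * r)"
  using in_ideal_gen[of "{1..n+1}" k n r "Gn n e d"] by (simp add: Gn_def mult.commute)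

lemma inJ_X: "k \<in> {1..n} \<Longrightarrow> in_R n r \<Longrightarrow> inJ n e (Var k ^ e k * r)"
  using in_ideal_gen[of "{1..n}" k n r "\<lambda>i. Var i ^ e i"] by (simp add: mult.commute)

lemma Fop_mult_const: "Fop n e (Const c * p) = Const c * Fop n e p"
  unfolding Fop_def by (simp add: dv_mult sum_distrib_left algebra_simps)

lemma Fop_of_nat_mult: "Fop n e (of_nat c * p) = of_nat c * Fop n e p"
  by (metis Const_def Fop_mult_const single_of_nat)

lemma Fop_of_int_mult: "Fop n e (of_int c * p) = of_int c * Fop n e p"
  by (metis Const_def Fop_mult_const single_of_int)

lemma Fop_numeral_mult: "Fop n e (numeral c * p) = numeral c * Fop n e p"
  by (metis Const_def Fop_mult_const single_numeral)

lemma Fop_diff: "Fop n e (p - q) = Fop n e p - Fop n e q"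
  using Fop_add[of n e "p - q" q] by simp

lemma inJ_F:
  assumes "inJ n e p"
  shows "inJ n e (Fop n e p)"
proof -
  obtain b where b: "\<forall>i\<in>{1..n}. in_R n (b i)" "p = (\<Sum>i=1..n. b i * Var i ^ e i)"
    using assms by (auto simp: in_ideal_def)
  have "Fop n e p = (\<Sum>i=1..n. Var i ^ e i * (Fop n e (b i) - 2 * of_nat (e i) * dv i (b i)))"
    unfolding b(2) Fop_sum
  proof (rule sum.cong)
    fix i assume i: "i \<in> {1..n}"
    show "Fop n e (b i * Var i ^ e i) = Var i ^ e i * (Fop n e (b i) - 2 * of_nat (e i) * dv i (b i))"
      unfolding mult.commute[of "b i" "Var i ^ e i"] by (rule F1[OF i])
  qed simp
  also have "inJ n e \<dots>"
    by (rule in_ideal_sum, rule inJ_X) (use b(1) in \<open>auto intro!: in_R_diff in_R_mult in_R_Fop in_R_dv\<close>)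
  finally show ?thesis .
qed

lemma sc_Varpow: "sc g (Var i ^ m * p) = Var i ^ m * sc (\<lambda>t. g (t + m)) p"
proof (induction m arbitrary: g)
  case 0
  then show ?case by simp
next
  case (Suc m)
  have "sc g (Var i ^ Suc m * p) = sc g (Var i * (Var i ^ m * p))" by (simp add: mult.assoc)
  also have "\<dots> = Var i * sc (\<lambda>t. g (Suc t)) (Var i ^ m * p)" by (rule sc_Var_mult)
  also have "\<dots> = Var i * (Var i ^ m * sc (\<lambda>t. g (Suc (t + m))) p)" by (simp add: Suc.IH)
  finally show ?case by (simp add: mult.assoc)
qed

lemma sc_ell_mult: "sc g (ell n * p) = ell n * sc (\<lambda>t. g (Suc t)) p"
  unfolding ell_def by (simp add: sum_distrib_right sc_sum sc_Var_mult)

lemma sc_ellpow: "sc g (ell n ^ m * p) = ell n ^ m * sc (\<lambda>t. g (t + m)) p"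
proof (induction m arbitrary: g)
  case 0
  then show ?case by simp
next
  case (Suc m)
  have "sc g (ell n ^ Suc m * p) = sc g (ell n * (ell n ^ m * p))" by (simp add: mult.assoc)
  also have "\<dots> = ell n * sc (\<lambda>t. g (Suc t)) (ell n ^ m * p)" by (rule sc_ell_mult)
  also have "\<dots> = ell n * (ell n ^ m * sc (\<lambda>t. g (Suc (t + m))) p)" by (simp add: Suc.IH)
  finally show ?case by (simp add: mult.assoc)
qed

lemma inJ_sc:
  assumes "inJ n e p"
  shows "inJ n e (sc g p)"
proof -
  obtain b where b: "\<forall>i\<in>{1..n}. in_R n (b i)" "p = (\<Sum>i=1..n. b i * Var i ^ e i)"
    using assms by (auto simp: in_ideal_def)
  have "sc g p = (\<Sum>i=1..n. Var i ^ e i * sc (\<lambda>t. g (t + e i)) (b i))"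
    unfolding b(2) sc_sum
  proof (rule sum.cong)
    fix i assume i: "i \<in> {1..n}"
    show "sc g (b i * Var i ^ e i) = Var i ^ e i * sc (\<lambda>t. g (t + e i)) (b i)"
      unfolding mult.commute[of "b i" "Var i ^ e i"] by (rule sc_Varpow)
  qed simp
  also have "inJ n e \<dots>"
    by (rule in_ideal_sum, rule inJ_X) (use b(1) in \<open>auto intro!: in_R_sc\<close>)
  finally show ?thesis .
qed

definition Kop :: "nat \<Rightarrow> nat \<Rightarrow> nat \<Rightarrow> 'a::comm_ring_1 mpoly \<Rightarrow> 'a mpoly" where
  "Kop n A B q = of_nat A * q - of_nat B * q - 2 * th n q"

lemma F2K: "Fop n e (ell n ^ m * a) = ell n ^ m * Fop n e a + of_nat m * ell n ^ (m - 1) * Kop n (\<Sum>i=1..n. e i - 1) (m - 1) a"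
  unfolding Kop_def F2 by (simp add: algebra_simps)

lemma in_R_Kop: "in_R n q \<Longrightarrow> in_R n (Kop n A B q)"
  unfolding Kop_def by (auto intro!: in_R_diff in_R_mult in_R_th)

lemma Fop_Kop: "in_R n q \<Longrightarrow> Fop n e (Kop n A B q) = Kop n A B (Fop n e q) - 2 * Fop n e q"
proof -
  assume q: "in_R n q"
  have "Fop n e (th n q) = Fop n e (sc (\<lambda>t. of_nat t) q)" by (simp add: th_sc[OF q])
  also have "\<dots> = sc (\<lambda>t. of_nat (Suc t)) (Fop n e q)" by (rule Fop_sc)
  also have "\<dots> = sc (\<lambda>t. of_nat t + 1) (Fop n e q)"
    by (simp add: add.commute)
  also have "\<dots> = sc (\<lambda>t. of_nat t) (Fop n e q) + sc (\<lambda>t. 1) (Fop n e q)"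
    by (simp add: sc_plus_fun)
  also have "\<dots> = th n (Fop n e q) + Fop n e q"
    by (simp add: th_sc[OF in_R_Fop[OF q]] sc_const Const_def)
  finally have FT: "Fop n e (th n q) = th n (Fop n e q) + Fop n e q" .
  show ?thesis
    by (simp only: Kop_def Fop_diff Fop_of_nat_mult Fop_numeral_mult FT) (simp add: algebra_simps)
qed

lemma stepB:
  fixes b :: "'a::comm_ring_1 mpoly"
  assumes bR: "in_R n b" and bJ: "inJ n e (ell n ^ d * b)"
  defines "N \<equiv> (\<Sum>i=1..n. e i - 1)"
  shows "inI n e d (of_nat d * ell n ^ (d - 1) * (Kop n N (d - 1) (Fop n e b) + Fop n e (Kop n N (d - 1) b))
     + of_nat d * of_nat (d - 1) * ell n ^ (d - 2) * Kop n N (d - 2) (Kop n N (d - 1) b))"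
proof -
  let ?L = "ell n :: 'a mpoly"
  let ?F = "Fop n e"
  have e1: "?F (?L ^ d * b) = ?L ^ d * ?F b + of_nat d * (?L ^ (d - 1) * Kop n N (d - 1) b)"
    using F2K[of n e d b] by (simp add: N_def mult.assoc)
  have e2: "?F (?L ^ d * ?F b) = ?L ^ d * ?F (?F b) + of_nat d * ?L ^ (d - 1) * Kop n N (d - 1) (?F b)"
    using F2K[of n e d "?F b"] by (simp add: N_def)
  have e3: "?F (?L ^ (d - 1) * Kop n N (d - 1) b) = ?L ^ (d - 1) * ?F (Kop n N (d - 1) b)
      + of_nat (d - 1) * ?L ^ (d - 2) * Kop n N (d - 2) (Kop n N (d - 1) b)"
    using F2K[of n e "d - 1" "Kop n N (d - 1) b"] by (simp add: N_def numeral_2_eq_2)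
  have "?F (?F (?L ^ d * b)) - ?L ^ d * ?F (?F b) =
      of_nat d * ?L ^ (d - 1) * (Kop n N (d - 1) (?F b) + ?F (Kop n N (d - 1) b))
     + of_nat d * of_nat (d - 1) * ?L ^ (d - 2) * Kop n N (d - 2) (Kop n N (d - 1) b)"
    unfolding e1 Fop_add Fop_of_nat_mult e2 e3 by (simp add: algebra_simps)
  moreover have "inI n e d (?F (?F (?L ^ d * b)) - ?L ^ d * ?F (?F b))"
    by (rule in_ideal_diff, rule inJ_inI, rule inJ_F, rule inJ_F, rule bJ, rule inI_L)
      (intro in_R_Fop bR)
  ultimately show ?thesis by simp
qed

lemma Const_sc: "Const c * sc g q = sc (\<lambda>t. c * g t) q"
  by (simp add: sc_const[symmetric] sc_sc)

lemma Kop_sc: "in_R n q \<Longrightarrow> Kop n A B q = sc (\<lambda>t. of_nat A - of_nat B - 2 * of_nat t) q"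
proof -
  assume q: "in_R n q"
  have 1: "of_nat A * q = sc (\<lambda>t. of_nat A) q" by (simp add: sc_const Const_def)
  have 2: "of_nat B * q = sc (\<lambda>t. of_nat B) q" by (simp add: sc_const Const_def)
  have 3: "2 * th n q = sc (\<lambda>t. 2 * of_nat t) q"
    using Const_sc[of 2 "\<lambda>t. of_nat t" q] by (simp add: th_sc[OF q] Const_def)
  show ?thesis unfolding Kop_def 1 2 3 by (simp add: sc_minus_fun)
qed

lemma odd_nz:
  assumes "odd (int N - int d)"
  shows "(of_nat N - of_nat d + 2 - 2 * of_nat t :: 'k::field_char_0) \<noteq> 0"
proof -
  have "(of_nat N - of_nat d + 2 - 2 * of_nat t :: 'k) = of_int (int N - int d + 2 - 2 * int t)" by simp
  moreover have "int N - int d + 2 - 2 * int t \<noteq> 0" using assms by presburger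
  ultimately show ?thesis by (metis of_int_eq_0_iff)
qed

lemma stepC:
  fixes b :: "'k::field_char_0 mpoly"
  assumes bR: "in_R n b" and bJ: "inJ n e (ell n ^ d * b)" and d: "d \<ge> 1"
    and par: "odd (int (\<Sum>i=1..n. e i - 1) - int d)"
  defines "N \<equiv> (\<Sum>i=1..n. e i - 1)"
  shows "inI n e d (of_nat d * ell n ^ (d - 1) * (2 * Fop n e b)
     + of_nat d * of_nat (d - 1) * ell n ^ (d - 2) * Kop n N (d - 1) b)"
proof -
  let ?L = "ell n :: 'k mpoly"
  let ?F = "Fop n e"
  define h where "h t = 1 / (of_nat N - of_nat d + 2 - 2 * of_nat t :: 'k)" for t
  have nz: "(of_nat N - of_nat d + 2 - 2 * of_nat t :: 'k) \<noteq> 0" for t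
    using odd_nz par unfolding N_def by blast
  have hinv: "(of_nat N - of_nat d + 2 - 2 * of_nat t) * h t = 1" for t
    unfolding h_def using nz[of t] by simp
  define bt where "bt = sc h b"
  have btR: "in_R n bt" unfolding bt_def by (rule in_R_sc[OF bR])
  have "?L ^ d * bt = sc (\<lambda>t. h (t - d)) (?L ^ d * b)"
    unfolding bt_def sc_ellpow by simp
  then have btJ: "inJ n e (?L ^ d * bt)" using inJ_sc[OF bJ] by simp
  have B: "inI n e d (of_nat d * ?L ^ (d - 1) * (Kop n N (d - 1) (?F bt) + ?F (Kop n N (d - 1) bt))
     + of_nat d * of_nat (d - 1) * ?L ^ (d - 2) * Kop n N (d - 2) (Kop n N (d - 1) bt))"
    using stepB[OF btR btJ] unfolding N_def .
  let ?k1 = "\<lambda>t. (of_nat N - of_nat (d - 1) - 2 * of_nat t :: 'k)"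
  have FbR: "in_R n (?F b)" by (rule in_R_Fop[OF bR])
  have Fbt: "?F bt = sc (\<lambda>t. h (Suc t)) (?F b)" unfolding bt_def by (rule Fop_sc)
  have c1a: "Kop n N (d - 1) (?F bt) = sc (\<lambda>t. ?k1 t * h (Suc t)) (?F b)"
    unfolding Kop_sc[OF in_R_Fop[OF btR]] unfolding Fbt sc_sc ..
  have Kbt: "Kop n N (d - 1) bt = sc (\<lambda>t. ?k1 t * h t) b"
    unfolding Kop_sc[OF btR] unfolding bt_def sc_sc ..
  have c1b: "?F (Kop n N (d - 1) bt) = sc (\<lambda>t. ?k1 (Suc t) * h (Suc t)) (?F b)"
    unfolding Kbt Fop_sc ..
  have fun1: "(\<lambda>t. ?k1 t * h (Suc t) + ?k1 (Suc t) * h (Suc t)) = (\<lambda>t. 2)"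
  proof
    fix t
    have d1: "(of_nat (d - 1) :: 'k) = of_nat d - 1" using d by (simp add: of_nat_diff)
    have "?k1 t + ?k1 (Suc t) = 2 * (of_nat N - of_nat d + 2 - 2 * of_nat (Suc t))"
      unfolding d1 by (simp add: algebra_simps)
    then have "?k1 t * h (Suc t) + ?k1 (Suc t) * h (Suc t) = 2 * (of_nat N - of_nat d + 2 - 2 * of_nat (Suc t)) * h (Suc t)"
      by (simp add: algebra_simps)
    also have "\<dots> = 2 * ((of_nat N - of_nat d + 2 - 2 * of_nat (Suc t)) * h (Suc t))"
      by (simp only: mult.assoc)
    also have "\<dots> = 2" by (simp only: hinv mult_1_right)
    finally show "?k1 t * h (Suc t) + ?k1 (Suc t) * h (Suc t) = 2" .
  qed
  have c1: "Kop n N (d - 1) (?F bt) + ?F (Kop n N (d - 1) bt) = 2 * ?F b"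
    unfolding c1a c1b sc_plus_fun fun1 by (simp add: sc_const Const_def)
  have c2: "of_nat (d - 1) * Kop n N (d - 2) (Kop n N (d - 1) bt) = of_nat (d - 1) * Kop n N (d - 1) b"
  proof (cases "d = 1")
    case True
    then show ?thesis by simp
  next
    case False
    then have d2: "(of_nat (d - 2) :: 'k) = of_nat d - 2" using d by (simp add: of_nat_diff)
    have "Kop n N (d - 2) (Kop n N (d - 1) bt) = sc (\<lambda>t. (of_nat N - of_nat (d - 2) - 2 * of_nat t) * (?k1 t * h t)) b"
      unfolding Kop_sc[OF in_R_Kop[OF btR]] unfolding Kbt sc_sc ..
    also have "(\<lambda>t. (of_nat N - of_nat (d - 2) - 2 * of_nat t) * (?k1 t * h t)) = ?k1"
    proof
      fix t
      have "(of_nat N - of_nat (d - 2) - 2 * of_nat t) * h t = (1 :: 'k)"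
        unfolding d2 using hinv[of t] by (simp add: algebra_simps)
      moreover have "(of_nat N - of_nat (d - 2) - 2 * of_nat t) * (?k1 t * h t) = ?k1 t * ((of_nat N - of_nat (d - 2) - 2 * of_nat t) * h t)"
        by (simp only: mult.left_commute)
      ultimately show "(of_nat N - of_nat (d - 2) - 2 * of_nat t) * (?k1 t * h t) = ?k1 t"
        by simp
    qed
    also have "sc ?k1 b = Kop n N (d - 1) b" by (rule Kop_sc[OF bR, symmetric])
    finally show ?thesis by simp
  qed
  have "of_nat d * ?L ^ (d - 1) * (Kop n N (d - 1) (?F bt) + ?F (Kop n N (d - 1) bt))
     + of_nat d * of_nat (d - 1) * ?L ^ (d - 2) * Kop n N (d - 2) (Kop n N (d - 1) bt)
     = of_nat d * ?L ^ (d - 1) * (2 * ?F b)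
     + of_nat d * ?L ^ (d - 2) * (of_nat (d - 1) * Kop n N (d - 2) (Kop n N (d - 1) bt))"
    unfolding c1 by (simp add: algebra_simps)
  also have "\<dots> = of_nat d * ?L ^ (d - 1) * (2 * ?F b)
     + of_nat d * of_nat (d - 1) * ?L ^ (d - 2) * Kop n N (d - 1) b"
    unfolding c2 by (simp add: algebra_simps)
  finally have EQ: "of_nat d * ?L ^ (d - 1) * (Kop n N (d - 1) (?F bt) + ?F (Kop n N (d - 1) bt))
     + of_nat d * of_nat (d - 1) * ?L ^ (d - 2) * Kop n N (d - 2) (Kop n N (d - 1) bt)
     = of_nat d * ?L ^ (d - 1) * (2 * ?F b)
     + of_nat d * of_nat (d - 1) * ?L ^ (d - 2) * Kop n N (d - 1) b" .
  show ?thesis using B unfolding EQ .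
qed

definition ff :: "nat \<Rightarrow> nat" where
  "ff k = (\<Sum>j=0..k div 2. (k - 2 * j) ^ 2)"

lemma ff_rec: "ff (Suc (Suc k)) = (k + 2) ^ 2 + ff k"
proof -
  have "Suc (Suc k) div 2 = Suc (k div 2)" by simp
  then have "ff (Suc (Suc k)) = (\<Sum>j=0..Suc (k div 2). (Suc (Suc k) - 2 * j) ^ 2)"
    by (simp add: ff_def)
  also have "\<dots> = (Suc (Suc k) - 2 * 0) ^ 2 + (\<Sum>j=0..k div 2. (Suc (Suc k) - 2 * Suc j) ^ 2)"
    by (subst sum.atLeast0_atMost_Suc_shift) (simp add: comp_def)
  also have "\<dots> = (k + 2) ^ 2 + ff k"
    by (simp add: ff_def)
  finally show ?thesis .
qed

lemma ff6: "6 * ff k = k * (k + 1) * (k + 2)"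
proof (induction k rule: less_induct)
  case (less k)
  show ?case
  proof (cases k)
    case 0
    then show ?thesis by (simp add: ff_def)
  next
    case (Suc k1)
    show ?thesis
    proof (cases k1)
      case 0
      then show ?thesis using Suc by (simp add: ff_def)
    next
      case (Suc k2)
      have "6 * ff k2 = k2 * (k2 + 1) * (k2 + 2)" using less \<open>k = Suc k1\<close> Suc by simp
      then show ?thesis using \<open>k = Suc k1\<close> Suc by (simp add: ff_rec algebra_simps power2_eq_square)
    qed
  qed
qed

lemma cc6: "6 * cc x = x * (x - 1) * (x + 1)"
proof (cases x)
  case 0
  then show ?thesis by (simp add: cc_def)
next
  case (Suc y)
  have "cc x = ff y" using Suc by (simp add: cc_def ff_def)
  then show ?thesis using ff6[of y] Suc by (simp add: algebra_simps)
qed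

lemma in_R_Dop: "in_R n p \<Longrightarrow> in_R n (Dop n e p)"
  unfolding Dop_def by (auto intro!: in_R_sum in_R_diff in_R_mult in_R_dv in_R_Var)

lemma Dop_diff0: "Dop n e (- p) = - Dop n e p"
  using Dop_add[of n e p "- p"] by (simp add: Dop_zero eq_neg_iff_add_eq_0 add.commute)

theorem core:
  fixes a :: "nat \<Rightarrow> 'k::field_char_0 mpoly" and b :: "'k mpoly"
  assumes d: "d \<ge> 1" and aR: "\<forall>i\<in>{1..n}. in_R n (a i)" and bR: "in_R n b"
    and rel: "(\<Sum>i=1..n. Var i ^ e i * a i) + ell n ^ d * b = 0"
    and par: "odd (int (\<Sum>i=1..n. e i - 1) - int d)"
  shows "inI n e d ((\<Sum>i=1..n. of_nat (cc (e i)) * a i * Var i ^ (e i - 2)) + of_nat (cc d) * b * ell n ^ (d - 2))"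
proof -
  define N where "N = (\<Sum>i=1..n. e i - 1)"
  let ?L = "ell n :: 'k mpoly"
  let ?F = "Fop n e"
  let ?D = "Dop n e"
  have Lb: "?L ^ d * b = (\<Sum>i=1..n. Var i ^ e i * (- a i))"
    using rel by (simp add: sum_negf eq_neg_iff_add_eq_0 add.commute)
  have bJ: "inJ n e (?L ^ d * b)"
    unfolding Lb by (rule in_ideal_sum, rule inJ_X) (use aR in \<open>auto intro: in_R_uminus\<close>)
  define TC where "TC = of_nat d * ?L ^ (d - 1) * (2 * ?F b) + of_nat d * of_nat (d - 1) * ?L ^ (d - 2) * Kop n N (d - 1) b"
  have C: "inI n e d TC" unfolding TC_def N_def by (rule stepC[OF bR bJ d par])
  define RI where "RI = (\<Sum>i=1..n. Var i ^ e i * (?D (a i) - 6 * of_nat (e i) * dv i (dv i (a i)))) + ?L ^ d * ?D b"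
  have RI: "inI n e d RI"
    unfolding RI_def
    by (intro in_ideal_add in_ideal_sum inI_X inI_L)
       (use aR bR in \<open>auto intro!: in_R_diff in_R_mult in_R_dv in_R_Dop\<close>)
  define SA where "SA = (\<Sum>i=1..n. of_nat (e i * (e i - 1) * (e i + 1)) * Var i ^ (e i - 2) * a i)"
  define TA where "TA = SA + 6 * of_nat d * ?L ^ (d - 1) * ?F b
     + of_nat d * of_nat (d - 1) * ?L ^ (d - 2) * (3 * of_nat N * b - 6 * th n b)
     - 2 * of_nat d * of_nat (d - 1) * of_nat (d - 2) * ?L ^ (d - 2) * b"
  have "0 = ?D ((\<Sum>i=1..n. Var i ^ e i * a i) + ?L ^ d * b)" using rel by (simp add: Dop_zero)
  also have "\<dots> = (\<Sum>i=1..n. ?D (Var i ^ e i * a i)) + ?D (?L ^ d * b)"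
    by (simp add: Dop_add Dop_sum)
  also have "(\<Sum>i=1..n. ?D (Var i ^ e i * a i)) = (\<Sum>i=1..n. Var i ^ e i * (?D (a i) - 6 * of_nat (e i) * dv i (dv i (a i))))
      + SA"
    unfolding SA_def sum.distrib[symmetric] by (rule sum.cong) (simp_all add: D1)
  also have "?D (?L ^ d * b) = ?L ^ d * ?D b + 6 * of_nat d * ?L ^ (d - 1) * ?F b
     + of_nat d * of_nat (d - 1) * ?L ^ (d - 2) * (3 * of_nat N * b - 6 * th n b)
     - 2 * of_nat d * of_nat (d - 1) * of_nat (d - 2) * ?L ^ (d - 2) * b"
    unfolding N_def by (rule D2)
  finally have "0 = RI + TA" unfolding RI_def TA_def by (simp add: algebra_simps)
  then have TAeq: "TA = - RI" by (simp add: eq_neg_iff_add_eq_0 add.commute)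
  have A: "inI n e d TA" unfolding TAeq by (rule in_ideal_uminus[OF RI])
  define E where "E = (\<Sum>i=1..n. of_nat (cc (e i)) * a i * Var i ^ (e i - 2)) + of_nat (cc d) * b * ?L ^ (d - 2)"
  have c6: "(of_nat (x * (x - 1) * (x + 1)) :: 'k mpoly) = 6 * of_nat (cc x)" for x
    by (metis cc6 of_nat_mult of_nat_numeral)
  have "6 * E = SA + of_nat (d * (d - 1) * (d + 1)) * ?L ^ (d - 2) * b"
    unfolding E_def SA_def c6 by (simp add: sum_distrib_left algebra_simps)
  also have "\<dots> = SA + of_nat d * of_nat (d - 1) * (3 * of_nat (d - 1) - 2 * of_nat (d - 2)) * ?L ^ (d - 2) * b"
    by (simp only: coefE)
  also have "\<dots> = TA - 3 * TC"
    unfolding TA_def TC_def Kop_def by (simp add: algebra_simps)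
  finally have E6: "6 * E = TA - 3 * TC" .
  have "inI n e d (TA - 3 * TC)"
    by (rule in_ideal_diff[OF A in_ideal_mult[OF _ C]]) simp
  then have "inI n e d (Const (1/6) * (6 * E))"
    unfolding E6 by (rule in_ideal_mult[rotated]) simp
  moreover have "Const (1/6) * (6 * E) = E"
  proof -
    have "Const (1/6) * (6 :: 'k mpoly) = Const (1/6) * Const 6" by (simp add: Const_def)
    also have "\<dots> = 1" by (simp only: Const_def mult_single) simp
    finally show ?thesis by (simp add: mult.assoc[symmetric])
  qed
  ultimately show ?thesis unfolding E_def by simp
qed

lemma Const_of_nat: "Const (of_nat k) = of_nat k"
  by (simp add: Const_def)

lemma cc2: "cc 2 = 1"
  by (simp add: cc_def)

lemma par_arith: "odd (S + (D - 1)) \<Longrightarrow> (D::nat) \<ge> 1 \<Longrightarrow> odd (int (S + 1) - int D)"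
  by presburger

lemma part1:
  fixes d :: "nat \<Rightarrow> nat" and a :: "nat \<Rightarrow> 'k::field_char_0 mpoly"
  assumes n: "n \<ge> 2" and dpos: "\<forall>i\<in>{1..n}. d i > 0"
    and aR: "\<forall>i\<in>{1..n+1}. in_R n (a i)"
    and rel: "(\<Sum>i=1..n+1. a i * gens n d i) = 0"
    and par: "odd (\<Sum>i=1..n. d i - 1)"
  shows "in_ideal n {1..n+1} (gens n d)
                ((\<Sum>i=1..n-1. Const (of_nat (cc (d i))) * a i * Var i ^ (d i - 2))
                 + a n + Const (of_nat (cc (d n))) * a (n+1) * ell n ^ (d n - 2))"
proof -
  obtain m where m: "n = Suc m" and m1: "m \<ge> 1" using n by (cases n) auto
  define e where "e = d(n := 2)"
  have "n \<in> {1..n}" using n by simp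
  then have "d n > 0" using dpos by blast
  then have dn: "d n \<ge> 1" by simp
  have eq_e: "i \<in> {1..m} \<Longrightarrow> e i = d i" for i using m by (auto simp: e_def)
  have en: "e n = 2" by (simp add: e_def)
  have gens_eq: "i \<in> {1..n} \<Longrightarrow> gens n d i = Var i ^ e i" for i
    using m by (auto simp: gens_def e_def)
  have rel': "(\<Sum>i=1..n. Var i ^ e i * a i) + ell n ^ d n * a (n+1) = 0"
  proof -
    have "(\<Sum>i=1..n+1. a i * gens n d i) = (\<Sum>i=1..n. a i * gens n d i) + a (n+1) * gens n d (n+1)"
      by simp
    also have "(\<Sum>i=1..n. a i * gens n d i) = (\<Sum>i=1..n. Var i ^ e i * a i)"
      by (rule sum.cong) (simp_all add: gens_eq mult.commute)
    also have "gens n d (n+1) = ell n ^ d n" by (simp add: gens_def)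
    finally show ?thesis using rel by (simp add: mult.commute)
  qed
  have sumsplit: "(\<Sum>i=1..n. f i) = (\<Sum>i=1..m. f i) + f n" for f :: "nat \<Rightarrow> nat"
    using m by simp
  have hE: "(\<Sum>i=1..n. e i - 1) = (\<Sum>i=1..m. d i - 1) + 1"
    unfolding sumsplit using eq_e en by simp
  have hD: "(\<Sum>i=1..n. d i - 1) = (\<Sum>i=1..m. d i - 1) + (d n - 1)"
    by (rule sumsplit)
  have par': "odd (int (\<Sum>i=1..n. e i - 1) - int (d n))"
    unfolding hE by (rule par_arith[OF _ dn]) (use par hD in simp)
  have aR': "\<forall>i\<in>{1..n}. in_R n (a i)" using aR by auto
  have bR: "in_R n (a (n+1))" using aR by auto
  have C: "inI n e (d n) ((\<Sum>i=1..n. of_nat (cc (e i)) * a i * Var i ^ (e i - 2)) + of_nat (cc (d n)) * a (n+1) * ell n ^ (d n - 2))"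
    by (rule core[OF dn aR' bR rel' par'])
  have cong: "in_ideal n {1..n+1} (Gn n e (d n)) p = in_ideal n {1..n+1} (gens n d) p" for p
    by (rule in_ideal_cong) (auto simp: Gn_def gens_def e_def)
  have expr: "(\<Sum>i=1..n. of_nat (cc (e i)) * a i * Var i ^ (e i - 2)) + of_nat (cc (d n)) * a (n+1) * ell n ^ (d n - 2)
    = (\<Sum>i=1..n-1. Const (of_nat (cc (d i))) * a i * Var i ^ (d i - 2))
                 + a n + Const (of_nat (cc (d n))) * a (n+1) * ell n ^ (d n - 2)"
  proof -
    have "(\<Sum>i=1..n. of_nat (cc (e i)) * a i * Var i ^ (e i - 2))
        = (\<Sum>i=1..m. of_nat (cc (e i)) * a i * Var i ^ (e i - 2)) + of_nat (cc (e n)) * a n * Var n ^ (e n - 2)"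
      using m by simp
    also have "(\<Sum>i=1..m. of_nat (cc (e i)) * a i * Var i ^ (e i - 2)) = (\<Sum>i=1..n-1. Const (of_nat (cc (d i))) * a i * Var i ^ (d i - 2))"
      using m by (intro sum.cong) (simp_all add: eq_e Const_of_nat)
    also have "of_nat (cc (e n)) * a n * Var n ^ (e n - 2) = a n"
      by (simp add: en cc2)
    finally show ?thesis by (simp add: Const_of_nat)
  qed
  show ?thesis using C unfolding cong expr .
qed

lemma part2:
  fixes a :: "nat \<Rightarrow> 'k::field_char_0 mpoly"
  assumes n: "odd n" and aR: "\<forall>i\<in>{1..n+1}. in_R n (a i)"
    and rel: "(\<Sum>i=1..n. a i * Var i ^ 2) + a (n+1) * ell n ^ 2 = 0"
  shows "in_ideal n {1..n+1} (\<lambda>i. if i \<le> n then Var i ^ 2 else ell n ^ 2) (\<Sum>i=1..n+1. a i)"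
proof -
  define e :: "nat \<Rightarrow> nat" where "e = (\<lambda>_. 2)"
  have rel': "(\<Sum>i=1..n. Var i ^ e i * a i) + ell n ^ 2 * a (n+1) = 0"
    using rel by (simp add: e_def mult.commute)
  have "(\<Sum>i=1..n. e i - 1) = n" by (simp add: e_def)
  then have par': "odd (int (\<Sum>i=1..n. e i - 1) - int 2)" using n by simp
  have aR': "\<forall>i\<in>{1..n}. in_R n (a i)" using aR by auto
  have bR: "in_R n (a (n+1))" using aR by auto
  have C: "inI n e 2 ((\<Sum>i=1..n. of_nat (cc (e i)) * a i * Var i ^ (e i - 2)) + of_nat (cc 2) * a (n+1) * ell n ^ (2 - 2))"
    by (rule core[OF _ aR' bR rel' par']) simp
  have G: "Gn n e 2 = (\<lambda>i. if i \<le> n then Var i ^ 2 else ell n ^ 2)"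
    by (auto simp: Gn_def e_def)
  have "(\<Sum>i=1..n. of_nat (cc (e i)) * a i * Var i ^ (e i - 2)) + of_nat (cc 2) * a (n+1) * ell n ^ (2 - 2)
      = (\<Sum>i=1..n+1. a i)"
    by (simp add: e_def cc2)
  then show ?thesis using C unfolding G by simp
qed

theorem mainTheorem13:
  fixes n :: nat
  shows "(\<forall>(d :: nat \<Rightarrow> nat) (a :: nat \<Rightarrow> 'k::field_char_0 mpoly).
            n \<ge> 2
          \<and> (\<forall>i\<in>{1..n}. d i > 0)
          \<and> minimally_generated n {1..n+1} (gens n d)
          \<and> (\<forall>i\<in>{1..n+1}. in_R n (a i))
          \<and> (\<Sum>i=1..n+1. a i * gens n d i) = 0
          \<and> odd (\<Sum>i=1..n. d i - 1)
          \<longrightarrow> in_ideal n {1..n+1} (gens n d)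
                ((\<Sum>i=1..n-1. Const (of_nat (cc (d i))) * a i * Var i ^ (d i - 2))
                 + a n + Const (of_nat (cc (d n))) * a (n+1) * ell n ^ (d n - 2)))
       \<and> (\<forall>a :: nat \<Rightarrow> 'k mpoly.
            odd n
          \<and> (\<forall>i\<in>{1..n+1}. in_R n (a i))
          \<and> (\<Sum>i=1..n. a i * Var i ^ 2) + a (n+1) * ell n ^ 2 = 0
          \<longrightarrow> in_ideal n {1..n+1} (\<lambda>i. if i \<le> n then Var i ^ 2 else ell n ^ 2)
                (\<Sum>i=1..n+1. a i))"
  using part1 part2 by blast

end
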